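(* For positive integers $n$ and $t$, the complete multipartite graph $K_{n\times t}$ (with $n$ parts each of size $t$) is integrable.
   Context: For a graph $G$ with adjacency matrix $A(G)$ and smallest eigenvalue $\theta_{\min}(G)$, $G$ is integrable if there is an integral matrix $N$ with $A(G)-\lfloor\theta_{\min}(G)\rfloor I=N^TN$. For $n\geq 2$, $K_{n\times t}$ is strongly regular with parameters $(nt,(n-1)t,(n-2)t,(n-1)t)$ and smallest eigenvalue $-t$. *)

theory Defs
  imports "Jordan_Normal_Form.Char_Poly"
begin

text \<open>A finite simple graph on vertex set {0..<v}, given by a symmetric irreflexive
  edge relation E. Its adjacency matrix is a v x v integer matrix.\<close>

definition adjacency_matrix :: "nat \<Rightarrow> (nat \<Rightarrow> nat \<Rightarrow> bool) \<Rightarrow> int mat" where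
  "adjacency_matrix v E = mat v v (\<lambda>(i, j). if E i j then 1 else 0)"

definition theta_min :: "int mat \<Rightarrow> real" where
  "theta_min A = Min {k. eigenvalue (map_mat real_of_int A) k}"

definition integrable :: "nat \<Rightarrow> (nat \<Rightarrow> nat \<Rightarrow> bool) \<Rightarrow> bool" where
  "integrable v E \<longleftrightarrow>
     (\<exists>(N :: int mat) m. N \<in> carrier_mat m v \<and>
        adjacency_matrix v E - of_int \<lfloor>theta_min (adjacency_matrix v E)\<rfloor> \<cdot>\<^sub>m 1\<^sub>m v
          = transpose_mat N * N)"

text \<open>Complete multipartite graph K_{n x t}: vertices 0..<n*t, vertex i lies in part i div t,
  and two vertices are adjacent iff they lie in different parts.\<close>
definition Knt_vertices :: "nat \<Rightarrow> nat \<Rightarrow> nat" where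
  "Knt_vertices n t = n * t"

definition Knt_edge :: "nat \<Rightarrow> nat \<Rightarrow> nat \<Rightarrow> bool" where
  "Knt_edge t i j \<longleftrightarrow> i div t \<noteq> j div t"

end

theory Submission
  imports Defs
begin


lemma sum_div_mod:
  assumes "(b::nat) > 0"
  shows "(\<Sum>r<a*b. f (r div b) (r mod b)) = (\<Sum>x<a. \<Sum>y<b. (f x y :: 'a::comm_monoid_add))"
proof (induction a)
  case 0 then show ?case by simp
next
  case (Suc a)
  have "{..<Suc a * b} = {..<a*b} \<union> {a*b..<a*b+b}" by auto
  then have "(\<Sum>r<Suc a*b. f (r div b) (r mod b)) = (\<Sum>r<a*b. f (r div b) (r mod b)) + (\<Sum>r\<in>{a*b..<a*b+b}. f (r div b) (r mod b))"
    by (simp add: sum.union_disjoint ivl_disj_int)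
  also have "(\<Sum>r\<in>{a*b..<a*b+b}. f (r div b) (r mod b)) = (\<Sum>y<b. f a y)"
  proof -
    have "(\<Sum>r\<in>{a*b..<a*b+b}. f (r div b) (r mod b)) = (\<Sum>y<b. f ((a*b+y) div b) ((a*b+y) mod b))"
      by (simp add: sum.atLeastLessThan_shift_bounds[of _ 0 "a*b" b, simplified] lessThan_atLeast0 add.commute)
    also have "\<dots> = (\<Sum>y<b. f a y)" using assms by (intro sum.cong) auto
    finally show ?thesis .
  qed
  finally show ?case using Suc by simp
qed



definition hh :: "nat \<Rightarrow> nat \<Rightarrow> nat \<Rightarrow> nat \<Rightarrow> 'a::comm_ring_1" where
  "hh t i x y = (if x div t = y div t \<and> x < y then (if i = x then 1 else if i = y then -1 else 0) else 0)"

definition Nm :: "nat \<Rightarrow> nat \<Rightarrow> 'a::comm_ring_1 mat" where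
  "Nm n t = mat (n*t*(n*t)+1) (n*t) (\<lambda>(r,i). if r = n*t*(n*t) then 1 else hh t i (r div (n*t)) (r mod (n*t)))"

lemma div_iff: "(t::nat) > 0 \<Longrightarrow> (y div t = p) = (p*t \<le> y \<and> y < p*t + t)"
  by (metis add_diff_inverse_nat diff_add_inverse2 div_less_iff_less_mult
    div_times_less_eq_dividend le_less_Suc_eq less_eq_div_iff_mult_less_eq
    mult_Suc not_add_less2)

lemma card_part:
  assumes "t > 0" "i < n*t"
  shows "card {y. y < n*t \<and> i div t = y div t \<and> i < y} + card {x. x < n*t \<and> x div t = i div t \<and> x < i} = t - 1"
proof -
  let ?p = "i div t"
  have pn: "?p < n" using assms by (simp add: less_mult_imp_div_less)
  have "{y. y < n*t \<and> i div t = y div t \<and> i < y} \<union> {x. x < n*t \<and> x div t = i div t \<and> x < i} = {?p*t..<?p*t+t} - {i}"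
  proof -
    have A: "y < n*t" if "y div t = ?p" for y
    proof -
      have "y < (?p+1)*t" using that assms div_iff[of t y ?p] by simp
      also have "\<dots> \<le> n*t" using pn by (intro mult_right_mono) auto
      finally show ?thesis .
    qed
    have B: "y div t = ?p \<longleftrightarrow> y \<in> {?p*t..<?p*t+t}" for y
      using assms(1) div_iff[of t y ?p] by simp
    show ?thesis
    proof (rule Set.set_eqI)
      fix y
      show "y \<in> {y. y < n*t \<and> i div t = y div t \<and> i < y} \<union> {x. x < n*t \<and> x div t = i div t \<and> x < i} \<longleftrightarrow> y \<in> {?p*t..<?p*t+t} - {i}"
        using A[of y] B[of y] by (cases "y < i"; cases "y = i") auto
    qed
  qed
  moreover have "i \<in> {?p*t..<?p*t+t}" using assms(1) div_iff[of t i ?p] by simp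
  ultimately have "card ({y. y < n*t \<and> i div t = y div t \<and> i < y} \<union> {x. x < n*t \<and> x div t = i div t \<and> x < i}) = t - 1"
    by simp
  moreover have "card ({y. y < n*t \<and> i div t = y div t \<and> i < y} \<union> {x. x < n*t \<and> x div t = i div t \<and> x < i})
     = card {y. y < n*t \<and> i div t = y div t \<and> i < y} + card {x. x < n*t \<and> x div t = i div t \<and> x < i}"
    by (rule card_Un_disjoint) auto
  ultimately show ?thesis by simp
qed

lemma sum_if_const: "(\<Sum>y<(V::nat). if P y then (c::'a::comm_ring_1) else 0) = of_nat (card {y. y < V \<and> P y}) * c"
proof -
  have "(\<Sum>y<V. if P y then c else 0) = sum (\<lambda>_. c) {y \<in> {..<V}. P y}"
    by (rule sum.inter_filter[symmetric]) simp
  also have "{y \<in> {..<V}. P y} = {y. y < V \<and> P y}" by auto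
  finally show ?thesis by simp
qed

lemma gram_entry:
  assumes t: "t > 0" and i: "i < n*t" and j: "j < n*t"
  shows "(\<Sum>x<n*t. \<Sum>y<n*t. hh t i x y * hh t j x y) =
    (if i = j then of_nat (t - 1) else if i div t = j div t then -1 else (0::'a::comm_ring_1))"
proof -
  let ?V = "n*t"
  let ?P = "\<lambda>x y. x div t = y div t \<and> x < y"
  have pt: "hh t i x y * hh t j x y =
     (if x = i \<and> x = j then (if ?P x y then 1 else 0) else 0)
   + (if y = i \<and> y = j then (if ?P x y then 1 else 0) else 0)
   - (if x = i \<and> y = j then (if ?P x y then 1 else 0) else 0)
   - (if y = i \<and> x = j then (if ?P x y then 1 else 0) else (0::'a))" for x y
  proof (cases "?P x y")
    case True
    then have "x \<noteq> y" by simp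
    then show ?thesis unfolding hh_def using True
      by (simp only: if_True if_P, (cases "x = i"; cases "y = i"; cases "x = j"; cases "y = j"); simp)
  next
    case False
    then show ?thesis unfolding hh_def by (simp only: if_False if_P if_not_P) simp
  qed
  have s1: "(\<Sum>x<?V. \<Sum>y<?V. (if x = i \<and> x = j then (if ?P x y then 1 else 0) else (0::'a)))
      = (if i = j then of_nat (card {y. y < ?V \<and> ?P i y}) else 0)"
  proof -
    have "(\<Sum>x<?V. \<Sum>y<?V. (if x = i \<and> x = j then (if ?P x y then 1 else 0) else (0::'a)))
       = (\<Sum>x<?V. if x = i then (if i = j then (\<Sum>y<?V. if ?P i y then 1 else 0) else 0) else 0)"
      by (intro sum.cong) auto
    also have "\<dots> = (if i = j then (\<Sum>y<?V. if ?P i y then 1 else 0) else 0)" using i by simp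
    finally show ?thesis by (simp add: sum_if_const)
  qed
  have s2: "(\<Sum>x<?V. \<Sum>y<?V. (if y = i \<and> y = j then (if ?P x y then 1 else 0) else (0::'a)))
      = (if i = j then of_nat (card {x. x < ?V \<and> ?P x i}) else 0)"
  proof -
    have "(\<Sum>y<?V. (if y = i \<and> y = j then (if ?P x y then 1 else 0) else (0::'a)))
       = (if i = j then (if ?P x i then 1 else 0) else 0)" for x
      using i by (cases "i = j") (auto simp: sum.delta intro!: sum.neutral)
    then have "(\<Sum>x<?V. \<Sum>y<?V. (if y = i \<and> y = j then (if ?P x y then 1 else 0) else (0::'a)))
       = (\<Sum>x<?V. if i = j then (if ?P x i then 1 else 0) else 0)"
      by simp
    then show ?thesis by (cases "i = j") (simp_all add: sum_if_const)
  qed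
  have s3: "(\<Sum>x<?V. \<Sum>y<?V. (if x = i \<and> y = j then (if ?P x y then 1 else 0) else (0::'a)))
      = (if ?P i j then 1 else 0)"
  proof -
    have "(\<Sum>y<?V. (if x = i \<and> y = j then (if ?P x y then 1 else 0) else (0::'a)))
       = (if x = i then (if ?P i j then 1 else 0) else 0)" for x
      using j by (cases "x = i") (auto simp: sum.delta)
    then show ?thesis using i by (simp add: sum.delta)
  qed
  have s4: "(\<Sum>x<?V. \<Sum>y<?V. (if y = i \<and> x = j then (if ?P x y then 1 else 0) else (0::'a)))
      = (if ?P j i then 1 else 0)"
  proof -
    have "(\<Sum>y<?V. (if y = i \<and> x = j then (if ?P x y then 1 else 0) else (0::'a)))
       = (if x = j then (if ?P j i then 1 else 0) else 0)" for x
      using i by (cases "x = j") (auto simp: sum.delta)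
    then show ?thesis using j by (simp add: sum.delta)
  qed
  have "(\<Sum>x<?V. \<Sum>y<?V. hh t i x y * hh t j x y) =
     (if i = j then of_nat (card {y. y < ?V \<and> ?P i y}) else 0)
   + (if i = j then of_nat (card {x. x < ?V \<and> ?P x i}) else 0)
   - (if ?P i j then 1 else 0) - (if ?P j i then 1 else (0::'a))"
    unfolding pt sum.distrib sum_subtractf s1 s2 s3 s4 by simp
  also have "\<dots> = (if i = j then of_nat (t - 1) else if i div t = j div t then -1 else (0::'a))"
  proof (cases "i = j")
    case True
    have "card {y. y < ?V \<and> ?P i y} + card {x. x < ?V \<and> ?P x i} = t - 1"
      using card_part[OF t i] by (simp add: conj_commute eq_commute)
    then show ?thesis using True by (simp flip: of_nat_add)
  next
    case False
    then show ?thesis by (cases "i < j") auto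
  qed
  finally show ?thesis .
qed



lemma smult_one_mat_vec:
  assumes "v \<in> carrier_vec V"
  shows "(c \<cdot>\<^sub>m 1\<^sub>m V) *\<^sub>v v = c \<cdot>\<^sub>v (v :: 'a :: comm_ring_1 vec)"
proof -
  have "(c \<cdot>\<^sub>m 1\<^sub>m V) *\<^sub>v v = c \<cdot>\<^sub>v (1\<^sub>m V *\<^sub>v v)"
  proof (rule eq_vecI)
    fix i assume i: "i < dim_vec (c \<cdot>\<^sub>v (1\<^sub>m V *\<^sub>v v))"
    have "(\<Sum>ia = 0..<V. c * ((if ia = i then 1 else 0) * v $ ia)) = (\<Sum>ia = 0..<V. (if ia = i then c * v $ ia else 0))"
      by (intro sum.cong) auto
    also have "\<dots> = c * v $ i" using i by simp
    finally show "((c \<cdot>\<^sub>m 1\<^sub>m V) *\<^sub>v v) $ i = (c \<cdot>\<^sub>v (1\<^sub>m V *\<^sub>v v)) $ i"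
      using i assms by (simp add: scalar_prod_def mult.assoc)
  qed (use assms in auto)
  then show ?thesis using assms by simp
qed

lemma self_scalar_nonneg: "0 \<le> (w :: real vec) \<bullet> w"
  unfolding scalar_prod_def by (intro sum_nonneg) auto

lemma self_scalar_pos:
  assumes "w \<in> carrier_vec V" "w \<noteq> 0\<^sub>v V"
  shows "0 < (w :: real vec) \<bullet> w"
proof -
  obtain i where i: "i < V" "w $ i \<noteq> 0" using assms by (metis eq_vecI carrier_vecD index_zero_vec(1) index_zero_vec(2))
  show ?thesis unfolding scalar_prod_def
    by (rule sum_pos2[of _ i]) (use i assms in auto)
qed

lemma psd_eig:
  fixes M N :: "real mat"
  assumes N: "N \<in> carrier_mat m V" and M: "M \<in> carrier_mat V V"
    and eq: "M + c \<cdot>\<^sub>m 1\<^sub>m V = transpose_mat N * N" and ev: "eigenvalue M k"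
  shows "k \<ge> - c"
proof -
  obtain v where v: "v \<in> carrier_vec V" "v \<noteq> 0\<^sub>v V" "M *\<^sub>v v = k \<cdot>\<^sub>v v"
    using ev M unfolding eigenvalue_def eigenvector_def by auto
  have "(transpose_mat N * N) *\<^sub>v v = (M + c \<cdot>\<^sub>m 1\<^sub>m V) *\<^sub>v v" by (simp add: eq)
  also have "\<dots> = M *\<^sub>v v + (c \<cdot>\<^sub>m 1\<^sub>m V) *\<^sub>v v"
    using M v by (intro add_mult_distrib_mat_vec) auto
  also have "\<dots> = (k + c) \<cdot>\<^sub>v v" using v smult_one_mat_vec[OF v(1)]
    by (auto simp: add_smult_distrib_vec)
  moreover have "(transpose_mat N * N) *\<^sub>v v = transpose_mat N *\<^sub>v (N *\<^sub>v v)"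
    by (rule assoc_mult_mat_vec) (use N v in auto)
  ultimately have e1: "transpose_mat N *\<^sub>v (N *\<^sub>v v) = (k + c) \<cdot>\<^sub>v v" by simp
  have "(transpose_mat N *\<^sub>v (N *\<^sub>v v)) \<bullet> v = (N *\<^sub>v v) \<bullet> (N *\<^sub>v v)"
    by (rule transpose_vec_mult_scalar[OF N v(1)]) (use N v in auto)
  then have "(k + c) * (v \<bullet> v) = (N *\<^sub>v v) \<bullet> (N *\<^sub>v v)" using e1 v by simp
  then have "(k + c) * (v \<bullet> v) \<ge> 0" using self_scalar_nonneg by simp
  moreover have "v \<bullet> v > 0" by (rule self_scalar_pos[OF v(1,2)])
  ultimately have "k + c \<ge> 0" by (simp add: zero_le_mult_iff)
  then show ?thesis by simp
qed

lemma theta_eq: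
  fixes M N :: "real mat"
  assumes N: "N \<in> carrier_mat m V" and M: "M \<in> carrier_mat V V"
    and eq: "M + c \<cdot>\<^sub>m 1\<^sub>m V = transpose_mat N * N" and ev: "eigenvalue M (- c)"
  shows "Min {k. eigenvalue M k} = - c"
proof (rule Min_eqI)
  have "char_poly M \<noteq> 0" using degree_monic_char_poly[OF M] by auto
  then have "finite {k. poly (char_poly M) k = 0}" by (rule poly_roots_finite)
  then show "finite {k. eigenvalue M k}" using eigenvalue_root_char_poly[OF M] by simp
  show "-c \<le> y" if "y \<in> {k. eigenvalue M k}" for y using psd_eig[OF N M eq] that by auto
  show "-c \<in> {k. eigenvalue M k}" using ev by simp
qed



lemma gram:
  assumes t: "t > 0"
  shows "transpose_mat (Nm n t) * (Nm n t :: 'a::comm_ring_1 mat) =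
    mat (n*t) (n*t) (\<lambda>(i,j). if i = j then of_nat t else if i div t = j div t then 0 else 1)"
proof (rule eq_matI)
  let ?V = "n*t"
  fix i j assume "i < dim_row (mat (n*t) (n*t) (\<lambda>(i,j). if i = j then of_nat t else if i div t = j div t then 0 else (1::'a)))"
    "j < dim_col (mat (n*t) (n*t) (\<lambda>(i,j). if i = j then of_nat t else if i div t = j div t then 0 else (1::'a)))"
  then have i: "i < ?V" and j: "j < ?V" by auto
  have V: "?V > 0" using i by linarith
  have "(transpose_mat (Nm n t) * (Nm n t :: 'a mat)) $$ (i,j) = (\<Sum>r<?V*?V+1. (Nm n t :: 'a mat) $$ (r,i) * Nm n t $$ (r,j))"
    using i j by (simp add: Nm_def scalar_prod_def lessThan_atLeast0)
  also have "\<dots> = (\<Sum>r<?V*?V. hh t i (r div ?V) (r mod ?V) * hh t j (r div ?V) (r mod ?V)) + 1"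
    using i j by (simp add: Nm_def)
  also have "\<dots> = (\<Sum>x<?V. \<Sum>y<?V. hh t i x y * hh t j x y) + 1"
    using sum_div_mod[OF V, where a="?V" and f="\<lambda>x y. hh t i x y * hh t j x y"] by simp
  also have "\<dots> = (if i = j then of_nat t else if i div t = j div t then 0 else 1)"
    unfolding gram_entry[OF t i j] using t by (auto simp: of_nat_diff)
  finally show "(transpose_mat (Nm n t) * (Nm n t :: 'a mat)) $$ (i,j) = mat (n*t) (n*t) (\<lambda>(i,j). if i = j then of_nat t else if i div t = j div t then 0 else (1::'a)) $$ (i,j)"
    using i j by simp
qed (auto simp: Nm_def)

lemma Nm_carrier: "Nm n t \<in> carrier_mat (n*t*(n*t)+1) (n*t)"
  by (simp add: Nm_def)


lemma hh_sum:
  assumes x: "x < V" and y: "y < V"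
  shows "(\<Sum>i<V. hh t i x y * f i) = (if x div t = y div t \<and> x < y then f x - f y else (0::'a::comm_ring_1))"
proof (cases "x div t = y div t \<and> x < y")
  case True
  then have "x \<noteq> y" by simp
  then have "(\<Sum>i<V. hh t i x y * f i) = (\<Sum>i<V. (if i = x then f x else 0) - (if i = y then f y else 0))"
    using True by (intro sum.cong) (auto simp: hh_def)
  also have "\<dots> = f x - f y" using x y by (simp add: sum_subtractf)
  finally show ?thesis using True by simp
next
  case False
  then have "hh t i x y = (0::'a)" for i unfolding hh_def by (simp only: if_False if_not_P)
  then show ?thesis using False by (simp only: if_not_P if_False mult_zero_left sum.neutral_const)
qed

lemma adj_entry: "i < V \<Longrightarrow> j < V \<Longrightarrow> adjacency_matrix V (Knt_edge t) $$ (i,j) = (if i div t = j div t then 0 else 1)"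
  by (simp add: adjacency_matrix_def Knt_edge_def)

lemma adjr_entry: "i < V \<Longrightarrow> j < V \<Longrightarrow> map_mat real_of_int (adjacency_matrix V (Knt_edge t)) $$ (i,j) = (if i div t = j div t then 0 else 1)"
  by (simp add: adjacency_matrix_def Knt_edge_def)

lemma unit_nz: "0 < t \<Longrightarrow> (unit_vec t 0 :: real vec) \<noteq> 0\<^sub>v t"
proof
  assume "0 < t" "(unit_vec t 0 :: real vec) = 0\<^sub>v t"
  then have "(unit_vec t 0 :: real vec) $ 0 = (0\<^sub>v t :: real vec) $ 0" by simp
  then show False using \<open>0 < t\<close> by simp
qed

lemma adj_carrier: "adjacency_matrix V E \<in> carrier_mat V V"
  by (simp add: adjacency_matrix_def)

theorem mainTheorem4:
  fixes n t :: nat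
  assumes "n > 0" and "t > 0"
  shows "integrable (Knt_vertices n t) (Knt_edge t)"
proof -
  let ?V = "n*t"
  let ?A = "adjacency_matrix ?V (Knt_edge t)"
  let ?Ar = "map_mat real_of_int ?A"
  have Ac: "?A \<in> carrier_mat ?V ?V" by (rule adj_carrier)
  have Arc: "?Ar \<in> carrier_mat ?V ?V" using Ac by simp
  show ?thesis
  proof (cases "n = 1")
    case True
    then have A0: "?A = 0\<^sub>m t t"
      by (intro eq_matI) (auto simp: adjacency_matrix_def Knt_edge_def)
    then have Ar0: "?Ar = 0\<^sub>m t t" by (intro eq_matI) auto
    have ev: "eigenvalue ?Ar (- 0)"
      unfolding eigenvalue_def eigenvector_def
    proof (intro exI[of _ "unit_vec t 0 :: real vec"] conjI)
      show "(unit_vec t 0 :: real vec) \<noteq> 0\<^sub>v (dim_row ?Ar)"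
        using unit_nz[OF assms(2)] True by (simp add: adjacency_matrix_def)
    qed (use Ar0 True in auto)
    have "theta_min ?A = - 0"
      unfolding theta_min_def
      by (rule theta_eq[OF _ Arc _ ev, of "0\<^sub>m 0 ?V"]) (use Ar0 True in auto)
    then show ?thesis unfolding integrable_def Knt_vertices_def
      by (intro exI[of _ "0\<^sub>m 0 ?V"] exI[of _ 0]) (use A0 True in auto)
  next
    case False
    then have n2: "n \<ge> 2" using assms(1) by simp
    have gr: "?Ar + real t \<cdot>\<^sub>m 1\<^sub>m ?V = transpose_mat (Nm n t) * Nm n t"
      unfolding gram[OF assms(2)] by (intro eq_matI) (auto simp: adjr_entry)
    define w :: "real vec" where "w = vec ?V (\<lambda>i. if i div t = 0 then 1 else if i div t = 1 then -1 else 0)"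
    have wc: "w \<in> carrier_vec ?V" by (simp add: w_def)
    have tV: "t + t \<le> ?V" using mult_le_mono1[OF n2, of t] by linarith
    have sumw: "(\<Sum>i<?V. w $ i) = 0"
    proof -
      have "(\<Sum>i<?V. w $ i) = (\<Sum>i<?V. (if i div t = 0 then 1 else 0) - (if i div t = 1 then 1 else (0::real)))"
        by (intro sum.cong) (auto simp: w_def)
      also have "\<dots> = real (card {i. i < ?V \<and> i div t = 0}) - real (card {i. i < ?V \<and> i div t = 1})"
        by (simp add: sum_subtractf sum_if_const)
      also have "{i. i < ?V \<and> i div t = 0} = {0..<t}"
      proof (rule Set.set_eqI)
        fix i show "i \<in> {i. i < ?V \<and> i div t = 0} \<longleftrightarrow> i \<in> {0..<t}"
          using tV div_iff[OF assms(2), of i 0] by auto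
      qed
      also have "{i. i < ?V \<and> i div t = 1} = {t..<t+t}"
      proof (rule Set.set_eqI)
        fix i show "i \<in> {i. i < ?V \<and> i div t = 1} \<longleftrightarrow> i \<in> {t..<t+t}"
          using tV div_iff[OF assms(2), of i 1] by auto
      qed
      finally show ?thesis by simp
    qed
    have Nw: "Nm n t *\<^sub>v w = 0\<^sub>v (?V*?V+1)"
    proof (rule eq_vecI)
      fix r assume "r < dim_vec (0\<^sub>v (?V*?V+1) :: real vec)"
      then have r: "r < ?V*?V+1" by simp
      have "(Nm n t *\<^sub>v w) $ r = (\<Sum>i<?V. (Nm n t :: real mat) $$ (r,i) * w $ i)"
        using r wc by (simp add: Nm_def scalar_prod_def lessThan_atLeast0)
      also have "\<dots> = 0"
      proof (cases "r = ?V*?V")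
        case True
        then show ?thesis using sumw by (simp add: Nm_def)
      next
        case False
        then have r': "r < ?V*?V" using r by simp
        then have V: "?V > 0" by (cases "?V") auto
        have x: "r div ?V < ?V" using r' by (simp add: less_mult_imp_div_less)
        have y: "r mod ?V < ?V" using V by simp
        have "(\<Sum>i<?V. (Nm n t :: real mat) $$ (r,i) * w $ i) = (\<Sum>i<?V. hh t i (r div ?V) (r mod ?V) * w $ i)"
          using r False by (intro sum.cong) (auto simp: Nm_def)
        also have "\<dots> = 0" unfolding hh_sum[OF x y] using x y by (auto simp: w_def)
        finally show ?thesis .
      qed
      finally show "(Nm n t *\<^sub>v w) $ r = 0\<^sub>v (?V*?V+1) $ r" using r by simp
    qed (simp add: Nm_def)
    have "(?Ar + real t \<cdot>\<^sub>m 1\<^sub>m ?V) *\<^sub>v w = transpose_mat (Nm n t) *\<^sub>v (Nm n t *\<^sub>v w)"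
      unfolding gr by (rule assoc_mult_mat_vec) (use wc in \<open>auto simp: Nm_def\<close>)
    also have "\<dots> = 0\<^sub>v ?V" unfolding Nw
      by (intro eq_vecI) (auto simp: Nm_def scalar_prod_def)
    finally have e0: "(?Ar + real t \<cdot>\<^sub>m 1\<^sub>m ?V) *\<^sub>v w = 0\<^sub>v ?V" .
    have "(?Ar + real t \<cdot>\<^sub>m 1\<^sub>m ?V) *\<^sub>v w = ?Ar *\<^sub>v w + real t \<cdot>\<^sub>v w"
      using add_mult_distrib_mat_vec[OF Arc _ wc, of "real t \<cdot>\<^sub>m 1\<^sub>m ?V"] smult_one_mat_vec[OF wc] by simp
    with e0 have e2: "?Ar *\<^sub>v w + real t \<cdot>\<^sub>v w = 0\<^sub>v ?V" by simp
    have e1: "?Ar *\<^sub>v w = (- real t) \<cdot>\<^sub>v w"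
    proof (rule eq_vecI)
      fix i assume "i < dim_vec ((- real t) \<cdot>\<^sub>v w)"
      then have i: "i < ?V" using wc by simp
      have "(?Ar *\<^sub>v w + real t \<cdot>\<^sub>v w) $ i = (0\<^sub>v ?V :: real vec) $ i" using e2 by simp
      then have "(?Ar *\<^sub>v w) $ i + real t * w $ i = 0" using i wc Arc by simp
      then show "(?Ar *\<^sub>v w) $ i = ((- real t) \<cdot>\<^sub>v w) $ i" using i wc by simp
    qed (use Arc wc in simp)
    have wnz: "w \<noteq> 0\<^sub>v ?V"
    proof
      assume "w = 0\<^sub>v ?V"
      then have "w $ 0 = 0" using assms by simp
      then show False using assms by (simp add: w_def)
    qed
    have ev: "eigenvalue ?Ar (- real t)"
      unfolding eigenvalue_def eigenvector_def using wc wnz e1 Arc by auto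
    have th: "theta_min ?A = - real t"
      unfolding theta_min_def by (rule theta_eq[OF Nm_carrier Arc gr ev])
    have fl: "\<lfloor>- real t\<rfloor> = - int t"
      using floor_of_int[of "- int t"] by simp
    have "?A - of_int \<lfloor>theta_min ?A\<rfloor> \<cdot>\<^sub>m 1\<^sub>m ?V = transpose_mat (Nm n t) * Nm n t"
      unfolding th fl gram[OF assms(2)] by (intro eq_matI) (auto simp: adj_entry)
    then show ?thesis unfolding integrable_def Knt_vertices_def
      by (intro exI[of _ "Nm n t :: int mat"] exI[of _ "?V*?V+1"]) (simp add: Nm_def)
  qed
qed


end
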